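(* Let $A$ be a finite alphabet and $Y\subseteq A^+$ a set of nonempty words. Let $\mathcal{S}=(A,Y,R')$ be the flat splicing system with $R'=\{\langle a\mid1-1\mid b\rangle : a,b\in A\}$. Then $Y^{\leftarrow_*}\setminus\{1\}=L(\mathcal{S})$.
   Context: $1$ denotes the empty word, $A^+=A^*\setminus\{1\}$. Flat splicing system $\mathcal{S}=(A,Y,R')$: rules $\langle\alpha\mid\beta-\gamma\mid\delta\rangle$ with $\alpha,\beta,\gamma,\delta\in A^*$; applying it to $u=x\alpha\beta y$ and $v=\gamma z\delta$ yields $x\alpha\gamma z\delta\beta y$. In particular $\langle a\mid1-1\mid b\rangle$ applied to $u=xay$ and $v=zb$ yields $xazby$. $L(\mathcal{S})$ is the smallest language containing $Y$ and closed under applying rules of $R'$. Iterated insertion: for $Z,Y\subseteq A^*$, $Z\leftarrow Y=\{z_1yz_2: z_1z_2\in Z, y\in Y\}$; $Y^{\leftarrow_0}=\{1\}$, $Y^{\leftarrow_{i+1}}=Y^{\leftarrow_i}\leftarrow Y$, $Y^{\leftarrow_*}=\bigcup_{i\ge0}Y^{\leftarrow_i}$. *)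

theory Defs
  imports Main
begin

(* Words over an alphabet are lists; the empty word 1 is []. *)

type_synonym 'a flat_rule = "'a list \<times> 'a list \<times> 'a list \<times> 'a list"

definition flat_apply :: "'a flat_rule \<Rightarrow> 'a list \<Rightarrow> 'a list \<Rightarrow> 'a list \<Rightarrow> bool" where
  "flat_apply r u v w \<longleftrightarrow> (case r of (\<alpha>, \<beta>, \<gamma>, \<delta>) \<Rightarrow>
     (\<exists>x y z. u = x @ \<alpha> @ \<beta> @ y \<and> v = \<gamma> @ z @ \<delta> \<and>
               w = x @ \<alpha> @ \<gamma> @ z @ \<delta> @ \<beta> @ y))"

inductive_set flat_lang :: "'a list set \<Rightarrow> 'a flat_rule set \<Rightarrow> 'a list set"
  for Y :: "'a list set" and R :: "'a flat_rule set" where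
  base: "u \<in> Y \<Longrightarrow> u \<in> flat_lang Y R"
| step: "\<lbrakk>r \<in> R; u \<in> flat_lang Y R; v \<in> flat_lang Y R; flat_apply r u v w\<rbrakk>
          \<Longrightarrow> w \<in> flat_lang Y R"

definition insertion :: "'a list set \<Rightarrow> 'a list set \<Rightarrow> 'a list set" where
  "insertion Z Y = {z1 @ y @ z2 | z1 y z2. z1 @ z2 \<in> Z \<and> y \<in> Y}"

fun iter_insertion :: "'a list set \<Rightarrow> nat \<Rightarrow> 'a list set" where
  "iter_insertion Y 0 = {[]}"
| "iter_insertion Y (Suc i) = insertion (iter_insertion Y i) Y"

definition iter_insertion_star :: "'a list set \<Rightarrow> 'a list set" where
  "iter_insertion_star Y = (\<Union>i. iter_insertion Y i)"

definition R_ab :: "'a set \<Rightarrow> 'a flat_rule set" where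
  "R_ab A = {([a], [], [], [b]) | a b. a \<in> A \<and> b \<in> A}"

end

theory Submission
  imports Defs
begin

lemma insertionI: "z1 @ z2 \<in> Z \<Longrightarrow> y \<in> Y \<Longrightarrow> z1 @ y @ z2 \<in> insertion Z Y"
  unfolding insertion_def by blast

lemma ins_closed:
  "v \<in> iter_insertion Y j \<Longrightarrow> x @ y' \<in> iter_insertion Y i \<Longrightarrow> x @ v @ y' \<in> iter_insertion Y (i + j)"
proof (induction j arbitrary: v)
  case 0 then show ?case by simp
next
  case (Suc j)
  from Suc.prems(1) obtain v1 yy v2 where v: "v = v1 @ yy @ v2" "v1 @ v2 \<in> iter_insertion Y j" "yy \<in> Y"
    by (auto simp: insertion_def)
  have "x @ (v1 @ v2) @ y' \<in> iter_insertion Y (i + j)" using Suc.IH[OF v(2) Suc.prems(2)] .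
  then have "(x @ v1) @ yy @ (v2 @ y') \<in> insertion (iter_insertion Y (i + j)) Y"
    using insertionI[OF _ v(3), of "x @ v1" "v2 @ y'"] by simp
  then show ?case using v(1) by simp
qed

lemma iter_lists: "Y \<subseteq> lists A \<Longrightarrow> iter_insertion Y i \<subseteq> lists A"
proof (induction i)
  case (Suc i)
  then show ?case by (fastforce simp: insertion_def)
qed simp

lemma flat_lists: "w \<in> flat_lang Y (R_ab A) \<Longrightarrow> Y \<subseteq> lists A \<Longrightarrow> w \<in> lists A"
  by (induction rule: flat_lang.induct) (auto simp: R_ab_def flat_apply_def)

lemma flat_nonempty: "w \<in> flat_lang Y (R_ab A) \<Longrightarrow> Y \<subseteq> lists A - {[]} \<Longrightarrow> w \<noteq> []"
  by (induction rule: flat_lang.induct) (auto simp: R_ab_def flat_apply_def)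

lemma flat_concat:
  assumes Y: "Y \<subseteq> lists A - {[]}"
  shows "u \<in> flat_lang Y (R_ab A) \<Longrightarrow> v \<in> flat_lang Y (R_ab A) \<Longrightarrow> v @ u \<in> flat_lang Y (R_ab A)"
proof (induction rule: flat_lang.induct)
  case (base u)
  have "v \<noteq> []" using flat_nonempty[OF base(2) Y] .
  then obtain x a where xa: "v = x @ [a]" by (metis rev_exhaust)
  have aA: "a \<in> A" using flat_lists[OF base(2)] Y xa by auto
  from base(1) Y have "u \<noteq> []" "u \<in> lists A" by auto
  then obtain z b where zb: "u = z @ [b]" "b \<in> A" by (metis rev_exhaust in_lists_conv_set last_in_set last_snoc)
  have "flat_apply ([a],[],[],[b]) v u (x @ [a] @ z @ [b] @ [])"
    unfolding flat_apply_def using xa zb by auto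
  moreover have "([a],[],[],[b]) \<in> R_ab A" using aA zb by (auto simp: R_ab_def)
  ultimately have "x @ [a] @ z @ [b] \<in> flat_lang Y (R_ab A)"
    using flat_lang.step[OF _ base(2) flat_lang.base[OF base(1)]] by auto
  then show ?case using xa zb by simp
next
  case (step r u1 u2 w)
  from step.hyps(1,4) obtain a b x y z where r: "r = ([a],[],[],[b])" "a \<in> A" "b \<in> A"
    and e: "u1 = x @ [a] @ y" "u2 = z @ [b]" "w = x @ [a] @ z @ [b] @ y"
    by (auto simp: R_ab_def flat_apply_def)
  have "flat_apply r (v @ u1) u2 (v @ w)" unfolding flat_apply_def r(1) prod.case using e
    by (intro exI[of _ "v @ x"] exI[of _ y] exI[of _ z]) auto
  then show ?case using flat_lang.step[OF step.hyps(1) step.IH(1)[OF step.prems] step.hyps(3)] by simp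
qed

theorem proposition11p8:
  fixes A :: "'a set" and Y :: "'a list set"
  assumes "finite A"
    and "Y \<subseteq> lists A - {[]}"
  shows "iter_insertion_star Y - {[]} = flat_lang Y (R_ab A)"
proof
  show "flat_lang Y (R_ab A) \<subseteq> iter_insertion_star Y - {[]}"
  proof
    fix w assume w: "w \<in> flat_lang Y (R_ab A)"
    have "w \<in> iter_insertion_star Y" using w
    proof (induction rule: flat_lang.induct)
      case (base u)
      have "[] @ u @ [] \<in> iter_insertion Y (Suc 0)" unfolding insertion_def iter_insertion.simps
        using base by blast
      then have "u \<in> iter_insertion Y (Suc 0)" by simp
      then show ?case unfolding iter_insertion_star_def by blast
    next
      case (step r u v w)
      from step.hyps(1,4) obtain a b x y z where 
        e: "u = x @ [a] @ y" "w = (x @ [a]) @ v @ y"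
        by (auto simp: R_ab_def flat_apply_def)
      from step.IH obtain i j where "u \<in> iter_insertion Y i" "v \<in> iter_insertion Y j"
        unfolding iter_insertion_star_def by auto
      then have "w \<in> iter_insertion Y (i + j)" using ins_closed[of v Y j "x @ [a]" y i] e by simp
      then show ?case unfolding iter_insertion_star_def by auto
    qed
    then show "w \<in> iter_insertion_star Y - {[]}" using flat_nonempty[OF w assms(2)] by auto
  qed
next
  have YA: "Y \<subseteq> lists A" using assms(2) by auto
  have "\<forall>w \<in> iter_insertion Y i. w \<noteq> [] \<longrightarrow> w \<in> flat_lang Y (R_ab A)" for i
  proof (induction i)
    case 0 then show ?case by simp
  next
    case (Suc i)
    show ?case
    proof (intro ballI impI)
      fix w assume "w \<in> iter_insertion Y (Suc i)"
      then obtain z1 y z2 where e: "w = z1 @ y @ z2" "z1 @ z2 \<in> iter_insertion Y i" "y \<in> Y"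
        by (auto simp: insertion_def)
      have yL: "y \<in> flat_lang Y (R_ab A)" using e(3) by (rule flat_lang.base)
      show "w \<in> flat_lang Y (R_ab A)"
      proof (cases "z1 = []")
        case True
        show ?thesis
        proof (cases "z2 = []")
          case True then show ?thesis using e \<open>z1 = []\<close> yL by simp
        next
          case False
          then have "z2 \<in> flat_lang Y (R_ab A)" using Suc.IH e(2) \<open>z1 = []\<close> by auto
          then show ?thesis using flat_concat[OF assms(2) _ yL] e(1) True by simp
        qed
      next
        case False
        then obtain x a where xa: "z1 = x @ [a]" by (metis rev_exhaust)
        have "z1 @ z2 \<in> lists A" using iter_lists[OF YA] e(2) by blast
        then have aA: "a \<in> A" using xa by auto
        from e(3) assms(2) have "y \<noteq> []" "y \<in> lists A" by auto
        then obtain z b where zb: "y = z @ [b]" "b \<in> A"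
          by (metis rev_exhaust in_lists_conv_set last_in_set last_snoc)
        have uL: "z1 @ z2 \<in> flat_lang Y (R_ab A)" using Suc.IH e(2) False by auto
        have "flat_apply ([a],[],[],[b]) (z1 @ z2) y w"
          unfolding flat_apply_def using xa zb e(1) by auto
        moreover have "([a],[],[],[b]) \<in> R_ab A" using aA zb by (auto simp: R_ab_def)
        ultimately show ?thesis using flat_lang.step[OF _ uL yL] by blast
      qed
    qed
  qed
  then show "iter_insertion_star Y - {[]} \<subseteq> flat_lang Y (R_ab A)"
    unfolding iter_insertion_star_def by blast
qed

end
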